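(* Let $n\ge 1$ and $d\ge 1$ be integers. Let $p:\mathbb{R}^3\to\mathbb{C}$ be a complex-valued homogeneous quadratic polynomial which is harmonic and horizontally conformal, i.e. $\tau(p)=0$ and $\kappa(p,p)=0$ on $\mathbb{R}^3$. Let $P_d,Q_d:\mathbb{C}^n\to\mathbb{C}$ be two linearly independent homogeneous polynomials in the complex variables $(z_1,\dots,z_n)$ (holomorphic, i.e. not involving $\bar z_k$) of the same degree $d$. Identify $\mathbb{R}^3\times\mathbb{C}^n$ with the Euclidean space $\mathbb{R}^{2n+3}$, and let $\mathcal Z(Q_d)=\{(x,z)\in\mathbb{R}^3\times\mathbb{C}^n : Q_d(z)=0\}$. Define $$\hat\Phi_d(x_1,x_2,x_3,z_1,\dots,z_n)=\frac{p(x_1,x_2,x_3)^{d/2}+P_d(z_1,\dots,z_n)}{Q_d(z_1,\dots,z_n)},$$ on $(\mathbb{R}^3\times\mathbb{C}^n)\setminus\mathcal Z(Q_d)$ if $d$ is even, and on $(\mathbb{R}^3\times\mathbb{C}^n)\setminus(\mathcal Z(Q_d)\cup\{(x,z): p(x)\in\mathbb{R},\ p(x)\le 0\})$ if $d$ is odd, where $p^{1/2}$ denotes the principal square root on $\mathbb{C}\setminus(-\infty,0]$. Then $\hat\Phi_d$ is a harmonic morphism on its domain.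
   Context: For complex-valued $C^2$ functions $\phi,\psi$ on $\mathbb{R}^3\times\mathbb{C}^n\cong\mathbb{R}^{2n+3}$ (Euclidean metric, $z_k=x_{2k+2}+i x_{2k+3}$), the tension field is $\tau(\phi)=\sum_{k=1}^3\partial^2\phi/\partial x_k^2+4\sum_{k=1}^n\partial^2\phi/\partial z_k\partial\bar z_k$ (the Laplacian) and the conformality operator is $\kappa(\phi,\psi)=\sum_{k=1}^3\frac{\partial\phi}{\partial x_k}\frac{\partial\psi}{\partial x_k}+2\sum_{k=1}^n\big(\frac{\partial\phi}{\partial z_k}\frac{\partial\psi}{\partial\bar z_k}+\frac{\partial\phi}{\partial\bar z_k}\frac{\partial\psi}{\partial z_k}\big)$, i.e. the complex-bilinear extension of the metric applied to the gradients. A map $\phi:(M,g)\to\mathbb{C}$ is a harmonic morphism if for every harmonic function $f$ on an open $U\subset\mathbb{C}$ with $\phi^{-1}(U)\neq\emptyset$, $f\circ\phi$ is harmonic on $\phi^{-1}(U)$; equivalently (Fuglede), $\tau(\phi)=0$ and $\kappa(\phi,\phi)=0$. *)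

theory Defs
  imports "HOL-Analysis.Analysis"
begin

definition pd :: "('a::euclidean_space \<Rightarrow> complex) \<Rightarrow> 'a \<Rightarrow> 'a \<Rightarrow> complex" where
  "pd f v q = vector_derivative (\<lambda>t::real. f (q + t *\<^sub>R v)) (at 0)"

definition C2_on :: "'a::euclidean_space set \<Rightarrow> ('a \<Rightarrow> complex) \<Rightarrow> bool" where
  "C2_on U f \<longleftrightarrow> f differentiable_on U \<and> (\<forall>b\<in>Basis. (pd f b) differentiable_on U)
     \<and> (\<forall>b\<in>Basis. \<forall>c\<in>Basis. continuous_on U (pd (pd f b) c))"

definition tension :: "('a::euclidean_space \<Rightarrow> complex) \<Rightarrow> 'a \<Rightarrow> complex" where
  "tension f q = (\<Sum>b\<in>Basis. pd (pd f b) b q)"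

definition kappa :: "('a::euclidean_space \<Rightarrow> complex) \<Rightarrow> ('a \<Rightarrow> complex) \<Rightarrow> 'a \<Rightarrow> complex" where
  "kappa f g q = (\<Sum>b\<in>Basis. pd f b q * pd g b q)"

definition harmonic_on :: "'a::euclidean_space set \<Rightarrow> ('a \<Rightarrow> complex) \<Rightarrow> bool" where
  "harmonic_on U f \<longleftrightarrow> C2_on U f \<and> (\<forall>q\<in>U. tension f q = 0)"

definition harmonic_morphism :: "'a::euclidean_space set \<Rightarrow> ('a \<Rightarrow> complex) \<Rightarrow> bool" where
  "harmonic_morphism D \<phi> \<longleftrightarrow> continuous_on D \<phi> \<and>
     (\<forall>U (f::complex \<Rightarrow> complex). open U \<and> harmonic_on U f \<and> D \<inter> \<phi> -` U \<noteq> {}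
        \<longrightarrow> harmonic_on (D \<inter> \<phi> -` U) (f \<circ> \<phi>))"

definition hom_quadratic :: "(real^3 \<Rightarrow> complex) \<Rightarrow> bool" where
  "hom_quadratic p \<longleftrightarrow> (\<exists>A::complex^3^3. \<forall>x. p x =
     (\<Sum>i\<in>UNIV. \<Sum>j\<in>UNIV. A$i$j * complex_of_real (x$i) * complex_of_real (x$j)))"

definition hom_hpoly :: "nat \<Rightarrow> (complex^'n::finite \<Rightarrow> complex) \<Rightarrow> bool" where
  "hom_hpoly d P \<longleftrightarrow> (\<exists>c :: ('n \<Rightarrow> nat) \<Rightarrow> complex. \<forall>z. P z =
     (\<Sum>\<alpha>\<in>{\<alpha>::'n \<Rightarrow> nat. sum \<alpha> UNIV = d}. c \<alpha> * (\<Prod>i\<in>UNIV. (z$i) ^ (\<alpha> i))))"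

end

theory Submission
  imports Defs "HOL-Complex_Analysis.Complex_Analysis"
begin

lemma pd_hasD:
  assumes "(f has_derivative f') (at q)"
  shows "pd f v q = f' v"
proof -
  have l: "linear f'" using assms has_derivative_linear by blast
  have "((\<lambda>t::real. q + t *\<^sub>R v) has_derivative (\<lambda>t. t *\<^sub>R v)) (at 0)"
    by (auto intro!: derivative_eq_intros)
  moreover have "(f has_derivative f') (at (q + 0 *\<^sub>R v))" using assms by simp
  ultimately have "((\<lambda>t. f (q + t *\<^sub>R v)) has_derivative (\<lambda>t. f' (t *\<^sub>R v))) (at 0)"
    using diff_chain_at[of "\<lambda>t::real. q + t *\<^sub>R v" _ 0 f f'] by (simp add: o_def)
  then have "((\<lambda>t. f (q + t *\<^sub>R v)) has_vector_derivative f' v) (at 0)"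
    unfolding has_vector_derivative_def using linear_scale[OF l] by simp
  then show ?thesis unfolding pd_def by (rule vector_derivative_at)
qed

lemma diff_hasD:
  assumes "f differentiable (at q)"
  shows "(f has_derivative (\<lambda>v. pd f v q)) (at q)"
proof -
  obtain f' where f': "(f has_derivative f') (at q)" using assms differentiable_def by blast
  have "(\<lambda>v. pd f v q) = f'" using pd_hasD[OF f'] by auto
  then show ?thesis using f' by simp
qed

lemma pd_local:
  assumes "open S" "q \<in> S" "\<And>y. y \<in> S \<Longrightarrow> f y = g y"
  shows "pd f v q = pd g v q"
proof -
  let ?T = "{t::real. q + t *\<^sub>R v \<in> S}"
  have "continuous_on UNIV (\<lambda>t::real. q + t *\<^sub>R v)" by (intro continuous_intros)
  then have oT: "open ?T"
    using open_vimage[OF assms(1), of "\<lambda>t::real. q + t *\<^sub>R v"] by (simp add: vimage_def)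
  have "0 \<in> ?T" using assms by simp
  have "\<And>D. ((\<lambda>t. f (q + t *\<^sub>R v)) has_vector_derivative D) (at 0) \<longleftrightarrow> ((\<lambda>t. g (q + t *\<^sub>R v)) has_vector_derivative D) (at 0)"
  proof
    fix D assume "((\<lambda>t. f (q + t *\<^sub>R v)) has_vector_derivative D) (at 0)"
    then show "((\<lambda>t. g (q + t *\<^sub>R v)) has_vector_derivative D) (at 0)"
      by (rule has_vector_derivative_transform_within_open[OF _ oT \<open>0 \<in> ?T\<close>]) (auto simp: assms)
  next
    fix D assume "((\<lambda>t. g (q + t *\<^sub>R v)) has_vector_derivative D) (at 0)"
    then show "((\<lambda>t. f (q + t *\<^sub>R v)) has_vector_derivative D) (at 0)"
      by (rule has_vector_derivative_transform_within_open[OF _ oT \<open>0 \<in> ?T\<close>]) (auto simp: assms)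
  qed
  then show ?thesis unfolding pd_def vector_derivative_def by simp
qed

lemma diffon_cong:
  assumes "open S" "\<And>y. y \<in> S \<Longrightarrow> f y = g y" "f differentiable_on S"
  shows "g differentiable_on S"
  using assms unfolding differentiable_on_def differentiable_def
  by (metis has_derivative_transform)

lemma diffon_at: "open S \<Longrightarrow> f differentiable_on S \<Longrightarrow> q \<in> S \<Longrightarrow> f differentiable (at q)"
  using differentiable_on_eq_differentiable_at by blast

lemma pd_add: "f differentiable (at q) \<Longrightarrow> g differentiable (at q) \<Longrightarrow>
  pd (\<lambda>x. f x + g x) v q = pd f v q + pd g v q"
  by (rule pd_hasD) (intro has_derivative_add diff_hasD)

lemma pd_mult: "f differentiable (at q) \<Longrightarrow> g differentiable (at q) \<Longrightarrow>
  pd (\<lambda>x. f x * g x) v q = f q * pd g v q + pd f v q * g q"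
  by (intro pd_hasD has_derivative_mult diff_hasD)

lemma pd_const: "pd (\<lambda>x. c) v q = 0"
  by (rule pd_hasD[where f'="\<lambda>_. 0", simplified]) (rule has_derivative_const)

lemma pd_chain: "f differentiable (at q) \<Longrightarrow> g differentiable (at (f q)) \<Longrightarrow>
  pd (\<lambda>x. g (f x)) v q = pd g (pd f v q) (f q)"
  using diff_chain_at[OF diff_hasD diff_hasD, of f q g] pd_hasD by (simp add: o_def)

lemma pd_lin: "bounded_linear l \<Longrightarrow> pd l v q = l v"
  by (rule pd_hasD) (rule bounded_linear_imp_has_derivative)

lemma pd_complex: fixes g :: "complex \<Rightarrow> complex"
  assumes "g differentiable (at w)"
  shows "pd g h w = of_real (Re h) * pd g 1 w + of_real (Im h) * pd g \<i> w"
proof -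
  have l: "linear (\<lambda>v. pd g v w)" using diff_hasD[OF assms] has_derivative_linear by blast
  have "h = Re h *\<^sub>R 1 + Im h *\<^sub>R \<i>" by (simp add: complex_eq_iff)
  then have "pd g h w = pd g (Re h *\<^sub>R 1 + Im h *\<^sub>R \<i>) w" by simp
  also have "\<dots> = Re h *\<^sub>R pd g 1 w + Im h *\<^sub>R pd g \<i> w"
    using linear_add[OF l] linear_scale[OF l] by simp
  finally show ?thesis by (simp add: scaleR_conv_of_real)
qed

lemma pd_holo: fixes g :: "complex \<Rightarrow> complex"
  assumes "g field_differentiable (at w)"
  shows "pd g h w = deriv g w * h"
  using assms DERIV_deriv_iff_field_differentiable has_field_derivative_imp_has_derivative pd_hasD
  by (metis mult.commute)

lemma bl_ReC: "bounded_linear (\<lambda>z. complex_of_real (Re z))"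
  using bounded_linear_compose[OF bounded_linear_of_real bounded_linear_Re] by (simp add: o_def)
lemma bl_ImC: "bounded_linear (\<lambda>z. complex_of_real (Im z))"
  using bounded_linear_compose[OF bounded_linear_of_real bounded_linear_Im] by (simp add: o_def)

lemma pd_ReC: "h differentiable (at q) \<Longrightarrow> pd (\<lambda>x. complex_of_real (Re (h x))) v q = complex_of_real (Re (pd h v q))"
  by (rule pd_hasD) (rule bounded_linear.has_derivative[OF bl_ReC diff_hasD])
lemma pd_ImC: "h differentiable (at q) \<Longrightarrow> pd (\<lambda>x. complex_of_real (Im (h x))) v q = complex_of_real (Im (pd h v q))"
  by (rule pd_hasD) (rule bounded_linear.has_derivative[OF bl_ImC diff_hasD])

lemma diffon_ReC: "h differentiable_on S \<Longrightarrow> (\<lambda>x. complex_of_real (Re (h x))) differentiable_on S"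
  unfolding differentiable_on_def differentiable_def
  using bounded_linear.has_derivative[OF bl_ReC] by blast
lemma diffon_ImC: "h differentiable_on S \<Longrightarrow> (\<lambda>x. complex_of_real (Im (h x))) differentiable_on S"
  unfolding differentiable_on_def differentiable_def
  using bounded_linear.has_derivative[OF bl_ImC] by blast

lemma C2_D1: "C2_on S f \<Longrightarrow> f differentiable_on S" by (simp add: C2_on_def)
lemma C2_D2: "C2_on S f \<Longrightarrow> b \<in> Basis \<Longrightarrow> pd f b differentiable_on S" by (simp add: C2_on_def)
lemma C2_D3: "C2_on S f \<Longrightarrow> b \<in> Basis \<Longrightarrow> c \<in> Basis \<Longrightarrow> continuous_on S (pd (pd f b) c)" by (simp add: C2_on_def)
lemma C2_cont: "C2_on S f \<Longrightarrow> continuous_on S f" by (simp add: C2_on_def differentiable_imp_continuous_on)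
lemma C2_cont1: "C2_on S f \<Longrightarrow> b \<in> Basis \<Longrightarrow> continuous_on S (pd f b)" by (simp add: C2_on_def differentiable_imp_continuous_on)
lemma C2_at: "open S \<Longrightarrow> C2_on S f \<Longrightarrow> q \<in> S \<Longrightarrow> f differentiable (at q)"
  using C2_D1 diffon_at by blast
lemma C2_at1: "open S \<Longrightarrow> C2_on S f \<Longrightarrow> q \<in> S \<Longrightarrow> b \<in> Basis \<Longrightarrow> pd f b differentiable (at q)"
  using C2_D2 diffon_at by blast

lemma C2_subset: "C2_on S f \<Longrightarrow> T \<subseteq> S \<Longrightarrow> C2_on T f"
  unfolding C2_on_def using differentiable_on_subset continuous_on_subset by metis

lemma pd_const': "pd (\<lambda>x. c) v = (\<lambda>q. 0)" by (rule ext) (rule pd_const)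

lemma C2_const: "C2_on S (\<lambda>x. c)"
  unfolding C2_on_def by (simp add: pd_const')

lemma C2_lin: assumes "bounded_linear l" shows "C2_on S l"
proof -
  have e: "pd l b = (\<lambda>x. l b)" for b using pd_lin[OF assms] by auto
  show ?thesis unfolding C2_on_def e pd_const
    using assms bounded_linear_imp_differentiable_on by auto
qed

lemma C2_add: assumes S: "open S" and f: "C2_on S f" and g: "C2_on S g"
  shows "C2_on S (\<lambda>x. f x + g x)"
proof -
  have e: "pd (\<lambda>x. f x + g x) b x = pd f b x + pd g b x" if "x \<in> S" for b x
    using pd_add C2_at[OF S f that] C2_at[OF S g that] by blast
  have d: "pd (\<lambda>x. f x + g x) b differentiable_on S" if "b \<in> Basis" for b
    by (rule diffon_cong[OF S e[symmetric]]) (auto intro!: differentiable_on_add C2_D2 f g that)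
  have e2: "pd (pd (\<lambda>x. f x + g x) b) c x = pd (pd f b) c x + pd (pd g b) c x"
    if "x \<in> S" "b \<in> Basis" for b c x
  proof -
    have "pd (pd (\<lambda>x. f x + g x) b) c x = pd (\<lambda>x. pd f b x + pd g b x) c x"
      by (rule pd_local[OF S that(1) e])
    also have "\<dots> = pd (pd f b) c x + pd (pd g b) c x"
      by (rule pd_add; rule C2_at1[OF S _ that(1) that(2)]; fact)
    finally show ?thesis .
  qed
  show ?thesis unfolding C2_on_def
    using d e2 f g by (auto intro!: differentiable_on_add C2_D1 continuous_on_add C2_D3
        elim!: continuous_on_cong[THEN iffD1, rotated] simp: C2_on_def)
qed

lemma C2_mult: assumes S: "open S" and f: "C2_on S f" and g: "C2_on S g"
  shows "C2_on S (\<lambda>x. f x * g x)"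
proof -
  have e: "pd (\<lambda>x. f x * g x) b x = f x * pd g b x + pd f b x * g x" if "x \<in> S" for b x
    using pd_mult C2_at[OF S f that] C2_at[OF S g that] by blast
  have d: "pd (\<lambda>x. f x * g x) b differentiable_on S" if "b \<in> Basis" for b
    by (rule diffon_cong[OF S e[symmetric]]) (auto intro!: differentiable_on_add differentiable_on_mult C2_D2[OF f that] C2_D2[OF g that] C2_D1[OF f] C2_D1[OF g])
  have e2: "pd (pd (\<lambda>x. f x * g x) b) c x = f x * pd (pd g b) c x + pd f c x * pd g b x
     + (pd f b x * pd g c x + pd (pd f b) c x * g x)"
    if "x \<in> S" "b \<in> Basis" for b c x
  proof -
    have df: "f differentiable (at x)" "g differentiable (at x)" using C2_at[OF S _ that(1)] f g by auto
    have dfb: "pd f b differentiable (at x)" "pd g b differentiable (at x)"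
      using C2_at1[OF S _ that(1) that(2)] f g by auto
    have "pd (pd (\<lambda>x. f x * g x) b) c x = pd (\<lambda>x. f x * pd g b x + pd f b x * g x) c x"
      by (rule pd_local[OF S that(1) e])
    also have "\<dots> = pd (\<lambda>x. f x * pd g b x) c x + pd (\<lambda>x. pd f b x * g x) c x"
      by (rule pd_add) (use df dfb in auto)
    also have "\<dots> = f x * pd (pd g b) c x + pd f c x * pd g b x
     + (pd f b x * pd g c x + pd (pd f b) c x * g x)"
      using pd_mult[OF df(1) dfb(2)] pd_mult[OF dfb(1) df(2)] by simp
    finally show ?thesis .
  qed
  have c: "continuous_on S (pd (pd (\<lambda>x. f x * g x) b) c)" if "b \<in> Basis" "c \<in> Basis" for b c
  proof -
    have "continuous_on S (\<lambda>x. f x * pd (pd g b) c x + pd f c x * pd g b x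
     + (pd f b x * pd g c x + pd (pd f b) c x * g x))"
      by (intro continuous_intros C2_cont C2_cont1 C2_D3 f g that)
    then show ?thesis using e2 that(1) continuous_on_cong by (smt (verit))
  qed
  show ?thesis unfolding C2_on_def
    using d c differentiable_on_mult[OF C2_D1[OF f] C2_D1[OF g]] by auto
qed

lemma C2_sum: assumes S: "open S" and f: "\<And>i. i \<in> I \<Longrightarrow> C2_on S (f i)"
  shows "C2_on S (\<lambda>x. \<Sum>i\<in>I. f i x)"
proof (cases "finite I")
  case True
  then show ?thesis using f
    by (induction I rule: finite_induct) (auto intro!: C2_add S C2_const)
qed (simp add: C2_const)

lemma C2_prod: assumes S: "open S" and f: "\<And>i. i \<in> I \<Longrightarrow> C2_on S (f i)"
  shows "C2_on S (\<lambda>x. \<Prod>i\<in>I. f i x)"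
proof (cases "finite I")
  case True
  then show ?thesis using f
    by (induction I rule: finite_induct) (auto intro!: C2_mult S C2_const)
qed (simp add: C2_const)

abbreviation ReC where "ReC z \<equiv> complex_of_real (Re z)"
abbreviation ImC where "ImC z \<equiv> complex_of_real (Im z)"

lemma Basis_complex_mem: "(1::complex) \<in> Basis" "\<i> \<in> Basis" by (auto simp: Basis_complex_def)

lemma pd_chainC: fixes g :: "complex \<Rightarrow> complex"
  assumes "f differentiable (at x)" "g differentiable (at (f x))"
  shows "pd (\<lambda>x. g (f x)) v x = ReC (pd f v x) * pd g 1 (f x) + ImC (pd f v x) * pd g \<i> (f x)"
  unfolding pd_chain[OF assms] by (rule pd_complex[OF assms(2)])

context
  fixes g :: "complex \<Rightarrow> complex" and f :: "'a::euclidean_space \<Rightarrow> complex" and S U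
  assumes S: "open S" and U: "open U" and g: "C2_on U g" and f: "C2_on S f" and fU: "\<And>x. x \<in> S \<Longrightarrow> f x \<in> U"
begin

lemma gdiff: "x \<in> S \<Longrightarrow> g differentiable (at (f x))" using C2_at[OF U g fU] .
lemma gxdiff: "x \<in> S \<Longrightarrow> u \<in> Basis \<Longrightarrow> pd g u differentiable (at (f x))" using C2_at1[OF U g fU] .
lemma fdiff: "x \<in> S \<Longrightarrow> f differentiable (at x)" using C2_at[OF S f] .
lemma fbdiff: "x \<in> S \<Longrightarrow> b \<in> Basis \<Longrightarrow> pd f b differentiable (at x)" using C2_at1[OF S f] .

lemma chain_e1: "x \<in> S \<Longrightarrow> pd (\<lambda>x. g (f x)) b x = ReC (pd f b x) * pd g 1 (f x) + ImC (pd f b x) * pd g \<i> (f x)"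
  using pd_chainC[OF fdiff gdiff] .

lemma comp_diffon: assumes "h differentiable_on U" shows "(\<lambda>x. h (f x)) differentiable_on S"
  by (rule differentiable_on_compose[OF C2_D1[OF f]]) (rule differentiable_on_subset[OF assms], use fU in auto)

lemma comp_conton: assumes "continuous_on U h" shows "continuous_on S (\<lambda>x. h (f x))"
  by (rule continuous_on_compose2[OF assms C2_cont[OF f]]) (use fU in auto)

lemma chain_e2: assumes x: "x \<in> S" and b: "b \<in> Basis"
  shows "pd (pd (\<lambda>x. g (f x)) b) c x =
    ReC (pd (pd f b) c x) * pd g 1 (f x) + ReC (pd f b x) * (ReC (pd f c x) * pd (pd g 1) 1 (f x) + ImC (pd f c x) * pd (pd g 1) \<i> (f x))
  + (ImC (pd (pd f b) c x) * pd g \<i> (f x) + ImC (pd f b x) * (ReC (pd f c x) * pd (pd g \<i>) 1 (f x) + ImC (pd f c x) * pd (pd g \<i>) \<i> (f x)))"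
proof -
  have d1: "(\<lambda>x. ReC (pd f b x)) differentiable (at x)" "(\<lambda>x. ImC (pd f b x)) differentiable (at x)"
    using diffon_ReC[OF C2_D2[OF f b]] diffon_ImC[OF C2_D2[OF f b]] diffon_at[OF S _ x] by blast+
  have d2: "(\<lambda>x. pd g u (f x)) differentiable (at x)" if "u \<in> Basis" for u
    using differentiable_chain_at[OF fdiff[OF x] gxdiff[OF x that]] by (simp add: o_def)
  have "pd (pd (\<lambda>x. g (f x)) b) c x = pd (\<lambda>x. ReC (pd f b x) * pd g 1 (f x) + ImC (pd f b x) * pd g \<i> (f x)) c x"
    by (rule pd_local[OF S x chain_e1])
  also have "\<dots> = pd (\<lambda>x. ReC (pd f b x) * pd g 1 (f x)) c x + pd (\<lambda>x. ImC (pd f b x) * pd g \<i> (f x)) c x"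
    by (rule pd_add) (use d1 d2 Basis_complex_mem in auto)
  also have "\<dots> = ReC (pd (pd f b) c x) * pd g 1 (f x) + ReC (pd f b x) * pd (\<lambda>x. pd g 1 (f x)) c x
     + (ImC (pd (pd f b) c x) * pd g \<i> (f x) + ImC (pd f b x) * pd (\<lambda>x. pd g \<i> (f x)) c x)"
    using pd_mult[OF d1(1) d2[OF Basis_complex_mem(1)]] pd_mult[OF d1(2) d2[OF Basis_complex_mem(2)]]
      pd_ReC[OF fbdiff[OF x b]] pd_ImC[OF fbdiff[OF x b]] by simp
  also have "pd (\<lambda>x. pd g 1 (f x)) c x = ReC (pd f c x) * pd (pd g 1) 1 (f x) + ImC (pd f c x) * pd (pd g 1) \<i> (f x)"
    by (rule pd_chainC[OF fdiff[OF x] gxdiff[OF x Basis_complex_mem(1)]])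
  also have "pd (\<lambda>x. pd g \<i> (f x)) c x = ReC (pd f c x) * pd (pd g \<i>) 1 (f x) + ImC (pd f c x) * pd (pd g \<i>) \<i> (f x)"
    by (rule pd_chainC[OF fdiff[OF x] gxdiff[OF x Basis_complex_mem(2)]])
  finally show ?thesis .
qed

lemma C2_chain: "C2_on S (\<lambda>x. g (f x))"
proof -
  have d: "pd (\<lambda>x. g (f x)) b differentiable_on S" if b: "b \<in> Basis" for b
    by (rule diffon_cong[OF S chain_e1[symmetric]], assumption)
      (intro differentiable_on_add differentiable_on_mult diffon_ReC diffon_ImC C2_D2[OF f b]
        comp_diffon C2_D2[OF g Basis_complex_mem(1)] C2_D2[OF g Basis_complex_mem(2)])
  have c: "continuous_on S (pd (pd (\<lambda>x. g (f x)) b) c)" if b: "b \<in> Basis" and c: "c \<in> Basis" for b c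
  proof -
    note cs = C2_cont1[OF f b] C2_cont1[OF f c] C2_D3[OF f b c]
      comp_conton[OF C2_cont1[OF g Basis_complex_mem(1)]] comp_conton[OF C2_cont1[OF g Basis_complex_mem(2)]]
      comp_conton[OF C2_D3[OF g Basis_complex_mem(1) Basis_complex_mem(1)]]
      comp_conton[OF C2_D3[OF g Basis_complex_mem(1) Basis_complex_mem(2)]]
      comp_conton[OF C2_D3[OF g Basis_complex_mem(2) Basis_complex_mem(1)]]
      comp_conton[OF C2_D3[OF g Basis_complex_mem(2) Basis_complex_mem(2)]]
    have "continuous_on S (\<lambda>x. ReC (pd (pd f b) c x) * pd g 1 (f x) + ReC (pd f b x) * (ReC (pd f c x) * pd (pd g 1) 1 (f x) + ImC (pd f c x) * pd (pd g 1) \<i> (f x))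
  + (ImC (pd (pd f b) c x) * pd g \<i> (f x) + ImC (pd f b x) * (ReC (pd f c x) * pd (pd g \<i>) 1 (f x) + ImC (pd f c x) * pd (pd g \<i>) \<i> (f x))))"
      by (intro continuous_intros cs)
    then show ?thesis using chain_e2[OF _ b] continuous_on_cong by (smt (verit))
  qed
  show ?thesis unfolding C2_on_def using d c comp_diffon[OF C2_D1[OF g]] by auto
qed

lemma tension_chain:
  assumes x: "x \<in> S" and tf: "tension f x = 0" and kf: "kappa f f x = 0" and tg: "tension g (f x) = 0"
  shows "tension (\<lambda>x. g (f x)) x = 0"
proof -
  define gx gy gxx gxy gyx gyy where "gx = pd g 1 (f x)" and "gy = pd g \<i> (f x)"
    and "gxx = pd (pd g 1) 1 (f x)" and "gxy = pd (pd g 1) \<i> (f x)"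
    and "gyx = pd (pd g \<i>) 1 (f x)" and "gyy = pd (pd g \<i>) \<i> (f x)"
  have "tension (\<lambda>x. g (f x)) x = (\<Sum>b\<in>Basis. ReC (pd (pd f b) b x) * gx + ReC (pd f b x) * (ReC (pd f b x) * gxx + ImC (pd f b x) * gxy)
  + (ImC (pd (pd f b) b x) * gy + ImC (pd f b x) * (ReC (pd f b x) * gyx + ImC (pd f b x) * gyy)))"
    unfolding tension_def gx_def gy_def gxx_def gxy_def gyx_def gyy_def
    by (simp add: chain_e2[OF x])
  also have "\<dots> = gx * (\<Sum>b\<in>Basis. ReC (pd (pd f b) b x)) + gy * (\<Sum>b\<in>Basis. ImC (pd (pd f b) b x))
     + gxx * (\<Sum>b\<in>Basis. ReC (pd f b x) * ReC (pd f b x)) + (gxy + gyx) * (\<Sum>b\<in>Basis. ReC (pd f b x) * ImC (pd f b x))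
     + gyy * (\<Sum>b\<in>Basis. ImC (pd f b x) * ImC (pd f b x))"
    by (simp add: sum.distrib sum_distrib_left algebra_simps)
  also have "(\<Sum>b\<in>Basis. ReC (pd (pd f b) b x)) = ReC (tension f x)"
    by (simp add: tension_def Re_sum)
  also have "(\<Sum>b\<in>Basis. ImC (pd (pd f b) b x)) = ImC (tension f x)"
    by (simp add: tension_def Im_sum)
  also have "(\<Sum>b\<in>Basis. ReC (pd f b x) * ImC (pd f b x)) = of_real (Im (kappa f f x) / 2)"
    by (simp add: kappa_def Im_sum sum_divide_distrib) (simp add: mult.commute)
  also have "(\<Sum>b\<in>Basis. ImC (pd f b x) * ImC (pd f b x)) = (\<Sum>b\<in>Basis. ReC (pd f b x) * ReC (pd f b x)) - ReC (kappa f f x)"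
    by (simp add: kappa_def Re_sum sum_subtractf[symmetric] algebra_simps)
  also have "gxx + gyy = 0" using tg unfolding tension_def Basis_complex_def gxx_def gyy_def by simp
  ultimately show ?thesis using tf kf by (simp add: distrib_right[symmetric])
qed

lemma kappa_chain_holo:
  assumes x: "x \<in> S" and gh: "g field_differentiable (at (f x))"
  shows "kappa (\<lambda>x. g (f x)) h x = deriv g (f x) * kappa f h x"
proof -
  have "pd (\<lambda>x. g (f x)) b x = deriv g (f x) * pd f b x" for b
    using pd_chain[OF fdiff[OF x] gdiff[OF x]] pd_holo[OF gh] by simp
  then show ?thesis by (simp add: kappa_def sum_distrib_left algebra_simps)
qed

end

lemma C2_holo: assumes U: "open U" and g: "g holomorphic_on U" shows "C2_on U g"
proof -
  have dg: "deriv g holomorphic_on U" using holomorphic_deriv[OF g U] .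
  have ddg: "deriv (deriv g) holomorphic_on U" using holomorphic_deriv[OF dg U] .
  have fd: "g field_differentiable (at w)" if "w \<in> U" for w using holomorphic_on_imp_differentiable_at[OF g U that] .
  have fd2: "deriv g field_differentiable (at w)" if "w \<in> U" for w using holomorphic_on_imp_differentiable_at[OF dg U that] .
  have e: "pd g u w = deriv g w * u" if "w \<in> U" for u w using pd_holo[OF fd[OF that]] .
  have d: "pd g u differentiable_on U" for u
    by (rule diffon_cong[OF U e[symmetric]], assumption)
      (intro differentiable_on_mult holomorphic_on_imp_differentiable_on dg differentiable_on_const)
  have e2: "pd (pd g u) v w = deriv (deriv g) w * v * u" if "w \<in> U" for u v w
  proof -
    have "pd (pd g u) v w = pd (\<lambda>w. deriv g w * u) v w" by (rule pd_local[OF U that e])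
    also have "\<dots> = deriv (deriv g) w * v * u"
      using pd_mult[OF field_differentiable_imp_differentiable[OF fd2[OF that]], of "\<lambda>_. u"]
        pd_holo[OF fd2[OF that]] by (simp add: pd_const)
    finally show ?thesis .
  qed
  have c: "continuous_on U (pd (pd g u) v)" for u v
  proof -
    have "continuous_on U (\<lambda>w. deriv (deriv g) w * v * u)"
      by (intro continuous_intros holomorphic_on_imp_continuous_on ddg)
    then show ?thesis using e2 continuous_on_cong by (smt (verit))
  qed
  show ?thesis unfolding C2_on_def using d c holomorphic_on_imp_differentiable_on[OF g] by auto
qed

lemma tension_holo:
  assumes S: "open S" and V: "open V" and g: "g holomorphic_on V" and f: "C2_on S f"
    and fV: "\<And>x. x \<in> S \<Longrightarrow> f x \<in> V" and x: "x \<in> S"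
  shows "tension (\<lambda>x. g (f x)) x = deriv g (f x) * tension f x + deriv (deriv g) (f x) * kappa f f x"
proof -
  have dg: "deriv g holomorphic_on V" using holomorphic_deriv[OF g V] .
  have fd: "g field_differentiable (at (f y))" if "y \<in> S" for y using holomorphic_on_imp_differentiable_at[OF g V fV[OF that]] .
  have fd2: "deriv g field_differentiable (at (f y))" if "y \<in> S" for y using holomorphic_on_imp_differentiable_at[OF dg V fV[OF that]] .
  have e: "pd (\<lambda>x. g (f x)) b y = deriv g (f y) * pd f b y" if "y \<in> S" for b y
    using pd_chain[OF C2_at[OF S f that] field_differentiable_imp_differentiable[OF fd[OF that]]] pd_holo[OF fd[OF that]]
    by simp
  have e2: "pd (pd (\<lambda>x. g (f x)) b) b x = deriv g (f x) * pd (pd f b) b x + deriv (deriv g) (f x) * (pd f b x * pd f b x)"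
    if b: "b \<in> Basis" for b
  proof -
    have d1: "(\<lambda>y. deriv g (f y)) differentiable (at x)"
      using differentiable_chain_at[OF C2_at[OF S f x] field_differentiable_imp_differentiable[OF fd2[OF x]]] by (simp add: o_def)
    have "pd (pd (\<lambda>x. g (f x)) b) b x = pd (\<lambda>y. deriv g (f y) * pd f b y) b x" by (rule pd_local[OF S x e])
    also have "\<dots> = deriv g (f x) * pd (pd f b) b x + pd (\<lambda>y. deriv g (f y)) b x * pd f b x"
      by (rule pd_mult[OF d1 C2_at1[OF S f x b]])
    also have "pd (\<lambda>y. deriv g (f y)) b x = deriv (deriv g) (f x) * pd f b x"
      using pd_chain[OF C2_at[OF S f x] field_differentiable_imp_differentiable[OF fd2[OF x]]] pd_holo[OF fd2[OF x]]
      by simp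
    finally show ?thesis by (simp add: algebra_simps)
  qed
  show ?thesis unfolding tension_def kappa_def by (simp add: e2 sum.distrib sum_distrib_left)
qed

lemma kappa_sym: "kappa f g x = kappa g f x" by (simp add: kappa_def mult.commute)

lemma kappa_const: "kappa (\<lambda>x. c) h x = 0" by (simp add: kappa_def pd_const)
lemma tension_const: "tension (\<lambda>x. c) x = 0" by (simp add: tension_def pd_const')

lemma kappa_add: "f differentiable (at x) \<Longrightarrow> g differentiable (at x) \<Longrightarrow>
  kappa (\<lambda>x. f x + g x) h x = kappa f h x + kappa g h x"
  by (simp add: kappa_def pd_add sum.distrib algebra_simps)

lemma kappa_mult: "f differentiable (at x) \<Longrightarrow> g differentiable (at x) \<Longrightarrow>
  kappa (\<lambda>x. f x * g x) h x = f x * kappa g h x + g x * kappa f h x"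
  by (simp add: kappa_def pd_mult sum.distrib sum_distrib_left algebra_simps)

lemma tension_add: assumes S: "open S" and f: "C2_on S f" and g: "C2_on S g" and x: "x \<in> S"
  shows "tension (\<lambda>x. f x + g x) x = tension f x + tension g x"
proof -
  have e: "pd (\<lambda>x. f x + g x) b y = pd f b y + pd g b y" if "y \<in> S" for b y
    using pd_add C2_at[OF S f that] C2_at[OF S g that] by blast
  have "pd (pd (\<lambda>x. f x + g x) b) b x = pd (pd f b) b x + pd (pd g b) b x" if b: "b \<in> Basis" for b
  proof -
    have "pd (pd (\<lambda>x. f x + g x) b) b x = pd (\<lambda>x. pd f b x + pd g b x) b x"
      by (rule pd_local[OF S x e])
    then show ?thesis using pd_add[OF C2_at1[OF S f x b] C2_at1[OF S g x b]] by simp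
  qed
  then show ?thesis by (simp add: tension_def sum.distrib)
qed

lemma tension_mult: assumes S: "open S" and f: "C2_on S f" and g: "C2_on S g" and x: "x \<in> S"
  shows "tension (\<lambda>x. f x * g x) x = f x * tension g x + g x * tension f x + 2 * kappa f g x"
proof -
  have e: "pd (\<lambda>x. f x * g x) b y = f y * pd g b y + pd f b y * g y" if "y \<in> S" for b y
    using pd_mult C2_at[OF S f that] C2_at[OF S g that] by blast
  have df: "f differentiable (at x)" "g differentiable (at x)" using C2_at[OF S _ x] f g by auto
  have "pd (pd (\<lambda>x. f x * g x) b) b x = f x * pd (pd g b) b x + g x * pd (pd f b) b x + 2 * (pd f b x * pd g b x)"
    if b: "b \<in> Basis" for b
  proof -
    have dfb: "pd f b differentiable (at x)" "pd g b differentiable (at x)"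
      using C2_at1[OF S _ x b] f g by auto
    have "pd (pd (\<lambda>x. f x * g x) b) b x = pd (\<lambda>x. f x * pd g b x + pd f b x * g x) b x"
      by (rule pd_local[OF S x e])
    also have "\<dots> = pd (\<lambda>x. f x * pd g b x) b x + pd (\<lambda>x. pd f b x * g x) b x"
      by (rule pd_add) (use df dfb in auto)
    also have "\<dots> = f x * pd (pd g b) b x + g x * pd (pd f b) b x + 2 * (pd f b x * pd g b x)"
      using pd_mult[OF df(1) dfb(2)] pd_mult[OF dfb(1) df(2)] by (simp add: algebra_simps)
    finally show ?thesis .
  qed
  then show ?thesis by (simp add: tension_def kappa_def sum.distrib sum_distrib_left)
qed

definition good :: "'a::euclidean_space set \<Rightarrow> ('a \<Rightarrow> complex) set \<Rightarrow> ('a \<Rightarrow> complex) \<Rightarrow> bool" where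
  "good S H f \<longleftrightarrow> C2_on S f \<and> (\<forall>h\<in>H. \<forall>x\<in>S. kappa f h x = 0)"

definition hm :: "'a::euclidean_space set \<Rightarrow> ('a \<Rightarrow> complex) set \<Rightarrow> ('a \<Rightarrow> complex) \<Rightarrow> bool" where
  "hm S G f \<longleftrightarrow> good S G f \<and> good S (Collect (good S G)) f \<and> (\<forall>x\<in>S. tension f x = 0)"

lemma good_const: "good S H (\<lambda>x. c)"
  by (simp add: good_def C2_const kappa_const)

lemma good_add: "open S \<Longrightarrow> good S H f \<Longrightarrow> good S H g \<Longrightarrow> good S H (\<lambda>x. f x + g x)"
  unfolding good_def by (auto simp: C2_add kappa_add C2_at)

lemma good_mult: "open S \<Longrightarrow> good S H f \<Longrightarrow> good S H g \<Longrightarrow> good S H (\<lambda>x. f x * g x)"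
  unfolding good_def by (auto simp: C2_mult kappa_mult C2_at)

lemma good_holo: assumes S: "open S" and V: "open V" and g: "g holomorphic_on V"
  and fV: "\<And>x. x \<in> S \<Longrightarrow> f x \<in> V" and f: "good S H f"
  shows "good S H (\<lambda>x. g (f x))"
proof -
  have C: "C2_on S f" using f by (simp add: good_def)
  have "C2_on S (\<lambda>x. g (f x))" using C2_chain[OF S V C2_holo[OF V g] C fV] .
  moreover have "kappa (\<lambda>x. g (f x)) h x = 0" if "h \<in> H" "x \<in> S" for h x
    using kappa_chain_holo[OF S V C2_holo[OF V g] C fV that(2) holomorphic_on_imp_differentiable_at[OF g V fV[OF that(2)]], of h]
      f that by (simp add: good_def)
  ultimately show ?thesis by (simp add: good_def)
qed

lemma good_C2: "good S H f \<Longrightarrow> C2_on S f" by (simp add: good_def)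

lemma hm_const: "hm S G (\<lambda>x. c)"
  by (simp add: hm_def good_const tension_const)

lemma hm_add: assumes S: "open S" shows "hm S G f \<Longrightarrow> hm S G g \<Longrightarrow> hm S G (\<lambda>x. f x + g x)"
  unfolding hm_def using S by (auto simp: good_add tension_add good_C2)

lemma hm_mult: assumes S: "open S" and f: "hm S G f" and g: "hm S G g" shows "hm S G (\<lambda>x. f x * g x)"
proof -
  have "tension (\<lambda>x. f x * g x) x = 0" if x: "x \<in> S" for x
  proof -
    have "kappa f g x = 0" using f g x unfolding hm_def good_def by auto
    moreover have "C2_on S f" "C2_on S g" using f g unfolding hm_def by (auto simp: good_C2)
    ultimately show ?thesis using tension_mult[OF S \<open>C2_on S f\<close> \<open>C2_on S g\<close> x] f g x unfolding hm_def by simp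
  qed
  then show ?thesis using f g S unfolding hm_def by (auto simp: good_mult)
qed

lemma hm_holo: assumes S: "open S" and V: "open V" and g: "g holomorphic_on V"
  and fV: "\<And>x. x \<in> S \<Longrightarrow> f x \<in> V" and f: "hm S G f"
  shows "hm S G (\<lambda>x. g (f x))"
proof -
  have "tension (\<lambda>x. g (f x)) x = 0" if x: "x \<in> S" for x
  proof -
    have "kappa f f x = 0" using f x unfolding hm_def good_def by auto
    moreover have "C2_on S f" using f unfolding hm_def by (auto simp: good_C2)
    ultimately show ?thesis using tension_holo[OF S V g \<open>C2_on S f\<close> fV x] f x unfolding hm_def by simp
  qed
  then show ?thesis using f unfolding hm_def by (auto intro: good_holo[OF S V g fV])
qed

lemma hm_sum: assumes S: "open S" and f: "\<And>i. i \<in> I \<Longrightarrow> hm S G (f i)"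
  shows "hm S G (\<lambda>x. \<Sum>i\<in>I. f i x)"
proof (cases "finite I")
  case True
  then show ?thesis using f
    by (induction I rule: finite_induct) (auto intro!: hm_add S hm_const)
qed (simp add: hm_const)

lemma hm_prod: assumes S: "open S" and f: "\<And>i. i \<in> I \<Longrightarrow> hm S G (f i)"
  shows "hm S G (\<lambda>x. \<Prod>i\<in>I. f i x)"
proof (cases "finite I")
  case True
  then show ?thesis using f
    by (induction I rule: finite_induct) (auto intro!: hm_mult S hm_const)
qed (simp add: hm_const)

lemma hm_power: assumes S: "open S" and f: "hm S G f" shows "hm S G (\<lambda>x. f x ^ k)"
  using hm_prod[OF S, where I="{..<k}" and f="\<lambda>_. f" and G=G] f by simp

lemma hm_gen: assumes "\<And>g. g \<in> G \<Longrightarrow> C2_on S g" "\<And>g x. g \<in> G \<Longrightarrow> x \<in> S \<Longrightarrow> tension g x = 0"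
   "\<And>g1 g2 x. g1 \<in> G \<Longrightarrow> g2 \<in> G \<Longrightarrow> x \<in> S \<Longrightarrow> kappa g1 g2 x = 0" and "g \<in> G"
  shows "hm S G g"
  using assms unfolding hm_def good_def by (auto simp: kappa_sym[of g])

lemma hm_kappa: "hm S G f \<Longrightarrow> x \<in> S \<Longrightarrow> kappa f f x = 0"
  unfolding hm_def good_def by auto

lemma hm_morph:
  assumes D: "open D" and C: "C2_on D \<phi>" and t: "\<And>x. x \<in> D \<Longrightarrow> tension \<phi> x = 0"
    and k: "\<And>x. x \<in> D \<Longrightarrow> kappa \<phi> \<phi> x = 0"
  shows "harmonic_morphism D \<phi>"
  unfolding harmonic_morphism_def
proof (intro conjI allI impI)
  show cD: "continuous_on D \<phi>" using C2_cont[OF C] .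
  fix U and f :: "complex \<Rightarrow> complex"
  assume a: "open U \<and> harmonic_on U f \<and> D \<inter> \<phi> -` U \<noteq> {}"
  let ?S = "D \<inter> \<phi> -` U"
  have S: "open ?S" using cD D a continuous_on_open_vimage by (metis inf_commute)
  have CS: "C2_on ?S \<phi>" using C2_subset[OF C] by blast
  have U: "open U" and fC: "C2_on U f" and tf: "\<And>w. w \<in> U \<Longrightarrow> tension f w = 0"
    using a by (auto simp: harmonic_on_def)
  have fU: "\<And>x. x \<in> ?S \<Longrightarrow> \<phi> x \<in> U" by auto
  show "harmonic_on ?S (f \<circ> \<phi>)"
    unfolding harmonic_on_def o_def
    using C2_chain[OF S U fC CS fU] tension_chain[OF S U fC CS fU _ t k tf] by auto
qed

lemma sum_Basis_prod:
  fixes f::"('a::euclidean_space * 'b::euclidean_space) \<Rightarrow> 'c::comm_monoid_add"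
  shows "sum f Basis = sum (\<lambda>i. f (i, 0)) Basis + sum (\<lambda>i. f (0, i)) Basis"
proof -
  have "inj_on (\<lambda>u. (u::'a, 0::'b)) Basis" "inj_on (\<lambda>u. (0::'a, u::'b)) Basis"
    by (auto intro!: inj_onI Pair_inject)
  thus ?thesis
    unfolding Basis_prod_def
    by (subst sum.union_disjoint) (auto simp: Basis_prod_def sum.reindex)
qed

lemma pd_fst: "pd (\<lambda>q::'a::euclidean_space \<times> 'b::euclidean_space. (F::'a\<Rightarrow>complex) (fst q)) (b, 0) q = pd F b (fst q)"
  by (simp add: pd_def)
lemma pd_fst': "pd (\<lambda>q::'a::euclidean_space \<times> 'b::euclidean_space. (F::'a\<Rightarrow>complex) (fst q)) (b, 0) = (\<lambda>q. pd F b (fst q))"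
  by (rule ext) (rule pd_fst)
lemma pd_fst0: "pd (\<lambda>q::'a::euclidean_space \<times> 'b::euclidean_space. (F::'a\<Rightarrow>complex) (fst q)) (0, c) q = 0"
  by (simp add: pd_def vector_derivative_const_at)
lemma pd_fst0': "pd (\<lambda>q::'a::euclidean_space \<times> 'b::euclidean_space. (F::'a\<Rightarrow>complex) (fst q)) (0, c) = (\<lambda>q. 0)"
  by (rule ext) (rule pd_fst0)

lemma tension_fst: "tension (\<lambda>q::'a::euclidean_space \<times> 'b::euclidean_space. (F::'a\<Rightarrow>complex) (fst q)) q = tension F (fst q)"
  unfolding tension_def sum_Basis_prod pd_fst' pd_fst0' pd_const' by simp

lemma kappa_fst: "kappa (\<lambda>q::'a::euclidean_space \<times> 'b::euclidean_space. (F::'a\<Rightarrow>complex) (fst q)) (\<lambda>q. F (fst q)) q = kappa F F (fst q)"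
  unfolding kappa_def sum_Basis_prod by (simp add: pd_fst pd_fst0)

lemma sum_Basis_vec_nth: "(\<Sum>c\<in>(Basis :: (complex^'n) set). vec_nth c i * vec_nth c j) = 0"
proof -
  have r: "Re (vec_nth c k) = c \<bullet> axis k (1::complex)" "Im (vec_nth c k) = c \<bullet> axis k \<i>" for c :: "complex^'n" and k
    by (simp_all add: inner_axis)
  have ei: "(\<Sum>c\<in>Basis. (c \<bullet> x) * (c \<bullet> y)) = x \<bullet> y" for x y :: "complex^'n"
    unfolding euclidean_inner[of x y] by (simp add: inner_commute)
  have "Re (\<Sum>c\<in>(Basis :: (complex^'n) set). vec_nth c i * vec_nth c j) =
     (\<Sum>c\<in>Basis. (c \<bullet> axis i 1) * (c \<bullet> axis j (1::complex))) - (\<Sum>c\<in>Basis. (c \<bullet> axis i \<i>) * (c \<bullet> axis j \<i>))"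
  proof -
    have "Re (vec_nth c i * vec_nth c j) = (c \<bullet> axis i 1) * (c \<bullet> axis j (1::complex)) - (c \<bullet> axis i \<i>) * (c \<bullet> axis j \<i>)" for c :: "complex^'n"
      by (simp add: inner_axis)
    then show ?thesis by (simp only: Re_sum sum_subtractf)
  qed
  also have "\<dots> = axis i (1::complex) \<bullet> axis j (1::complex) - axis i \<i> \<bullet> axis j \<i>"
    by (simp only: ei)
  also have "\<dots> = 0" by (simp add: inner_axis_axis)
  finally have 1: "Re (\<Sum>c\<in>(Basis :: (complex^'n) set). vec_nth c i * vec_nth c j) = 0" .
  have "Im (\<Sum>c\<in>(Basis :: (complex^'n) set). vec_nth c i * vec_nth c j) =
     (\<Sum>c\<in>Basis. (c \<bullet> axis i 1) * (c \<bullet> axis j \<i>)) + (\<Sum>c\<in>Basis. (c \<bullet> axis i \<i>) * (c \<bullet> axis j (1::complex)))"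
  proof -
    have "Im (vec_nth c i * vec_nth c j) = (c \<bullet> axis i 1) * (c \<bullet> axis j \<i>) + (c \<bullet> axis i \<i>) * (c \<bullet> axis j (1::complex))" for c :: "complex^'n"
      by (simp add: inner_axis)
    then show ?thesis by (simp only: Im_sum sum.distrib)
  qed
  also have "\<dots> = axis i (1::complex) \<bullet> axis j \<i> + axis i \<i> \<bullet> axis j (1::complex)"
    by (simp only: ei)
  also have "\<dots> = 0" by (simp add: inner_axis_axis)
  finally show ?thesis using 1 by (simp add: complex_eq_iff)
qed

lemma bl_fstC: "bounded_linear (\<lambda>q::(real^'m) \<times> (complex^'n). complex_of_real (vec_nth (fst q) i))"
proof -
  have "bounded_linear (\<lambda>q::(real^'m) \<times> (complex^'n). vec_nth (fst q) i)"
    using bounded_linear_compose[OF bounded_linear_vec_nth bounded_linear_fst] .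
  then show ?thesis using bounded_linear_compose[OF bounded_linear_of_real] by blast
qed
lemma bl_snd: "bounded_linear (\<lambda>q::(real^'m) \<times> (complex^'n). vec_nth (snd q) i)"
  using bounded_linear_compose[OF bounded_linear_vec_nth bounded_linear_snd] .

lemma C2_g0: assumes hq: "hom_quadratic p" and S: "open S"
  shows "C2_on S (\<lambda>q::(real^3) \<times> (complex^'n). p (fst q))"
proof -
  obtain A :: "complex^3^3" where A: "\<And>x. p x = (\<Sum>i\<in>UNIV. \<Sum>j\<in>UNIV. vec_nth (vec_nth A i) j * complex_of_real (vec_nth x i) * complex_of_real (vec_nth x j))"
    using hq unfolding hom_quadratic_def by blast
  have "C2_on S (\<lambda>q::(real^3) \<times> (complex^'n). \<Sum>i\<in>UNIV. \<Sum>j\<in>UNIV. vec_nth (vec_nth A i) j * complex_of_real (vec_nth (fst q) i) * complex_of_real (vec_nth (fst q) j))"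
    by (intro C2_sum C2_mult C2_const C2_lin bl_fstC S)
  then show ?thesis by (simp add: A)
qed

lemma C2_Z: "C2_on S (\<lambda>q::(real^'m) \<times> (complex^'n). vec_nth (snd q) i)"
  by (rule C2_lin[OF bl_snd])

lemma pd_Z: "pd (\<lambda>q::(real^'m) \<times> (complex^'n). vec_nth (snd q) i) v = (\<lambda>q. vec_nth (snd v) i)"
  by (rule ext) (rule pd_lin[OF bl_snd])

lemma tension_Z: "tension (\<lambda>q::(real^'m) \<times> (complex^'n). vec_nth (snd q) i) q = 0"
  by (simp add: tension_def pd_Z pd_const')

lemma kappa_Z: "kappa (\<lambda>q::(real^'m) \<times> (complex^'n). vec_nth (snd q) i) (\<lambda>q. vec_nth (snd q) j) q = 0"
  unfolding kappa_def sum_Basis_prod pd_Z using sum_Basis_vec_nth by simp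

lemma kappa_g0_Z: "kappa (\<lambda>q::(real^'m) \<times> (complex^'n). F (fst q)) (\<lambda>q. vec_nth (snd q) j) q = 0"
  unfolding kappa_def sum_Basis_prod pd_Z pd_fst0 by simp

lemma hm_C2: "hm S G f \<Longrightarrow> C2_on S f" by (auto simp: hm_def good_def)
lemma hm_tension: "hm S G f \<Longrightarrow> x \<in> S \<Longrightarrow> tension f x = 0" by (simp add: hm_def)

lemma open_pre: assumes "continuous_on UNIV f" "open B" shows "open (f -` B)"
  using assms continuous_on_open_vimage[OF open_UNIV] by auto

theorem mainTheorem1:
  fixes p :: "real^3 \<Rightarrow> complex"
    and P Q :: "complex^'n::finite \<Rightarrow> complex"
    and d :: nat
  assumes "d \<ge> 1"
    and "hom_quadratic p"
    and "\<forall>x. tension p x = 0"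
    and "\<forall>x. kappa p p x = 0"
    and "hom_hpoly d P" and "hom_hpoly d Q"
    and "\<forall>a b::complex. (\<forall>z. a * P z + b * Q z = 0) \<longrightarrow> a = 0 \<and> b = 0"
  shows "harmonic_morphism
     (if even d then {(x, z). Q z \<noteq> 0}
      else {(x, z). Q z \<noteq> 0 \<and> \<not> (p x \<in> \<real> \<and> Re (p x) \<le> 0)})
     (\<lambda>(x, z). ((if even d then p x ^ (d div 2) else csqrt (p x) ^ d) + P z) / Q z)"
proof -
  define g0 where "g0 = (\<lambda>q::(real^3)\<times>(complex^'n). p (fst q))"
  define G where "G = insert g0 (range (\<lambda>i q. vec_nth (snd q) i))"
  have gens: "hm S G g" if S: "open S" and g: "g \<in> G" for S g
  proof (rule hm_gen[OF _ _ _ g])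
    fix g assume "g \<in> G"
    then show "C2_on S g" unfolding G_def g0_def using C2_g0[OF assms(2) S] C2_Z by auto
  next
    fix g x assume "g \<in> G"
    then show "tension g x = 0" unfolding G_def g0_def using tension_fst[of p x] assms(3) tension_Z[of _ x] by auto
  next
    fix g1 g2 x assume "g1 \<in> G" "g2 \<in> G"
    have k1: "kappa g0 g0 x = 0" using kappa_fst[of p x] assms(4) by (simp add: g0_def)
    have k2: "kappa g0 (\<lambda>q. vec_nth (snd q) j) x = 0" for j unfolding g0_def by (rule kappa_g0_Z)
    have k3: "kappa (\<lambda>q. vec_nth (snd q) j) g0 x = 0" for j using k2 kappa_sym by metis
    have k4: "kappa (\<lambda>q::(real^3)\<times>(complex^'n). vec_nth (snd q) i) (\<lambda>q. vec_nth (snd q) j) x = 0" for i j by (rule kappa_Z)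
    from \<open>g1 \<in> G\<close> \<open>g2 \<in> G\<close> show "kappa g1 g2 x = 0" unfolding G_def
      using k1 k2 k3 k4 by auto
  qed
  have g0hm: "hm S G g0" if "open S" for S using gens[OF that] by (simp add: G_def)
  have Zhm: "hm S G (\<lambda>q. vec_nth (snd q) i)" if "open S" for S i using gens[OF that] by (simp add: G_def)
  have Phm: "hm S G (\<lambda>q. R (snd q))" if S: "open S" and R: "hom_hpoly d R" for S R
  proof -
    obtain c :: "('n \<Rightarrow> nat) \<Rightarrow> complex" where c: "\<And>z. R z =
     (\<Sum>\<alpha>\<in>{\<alpha>::'n \<Rightarrow> nat. sum \<alpha> UNIV = d}. c \<alpha> * (\<Prod>i\<in>UNIV. (vec_nth z i) ^ (\<alpha> i)))"
      using R unfolding hom_hpoly_def by blast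
    have "hm S G (\<lambda>q. \<Sum>\<alpha>\<in>{\<alpha>::'n \<Rightarrow> nat. sum \<alpha> UNIV = d}. c \<alpha> * (\<Prod>i\<in>UNIV. (vec_nth (snd q) i) ^ (\<alpha> i)))"
      by (intro hm_sum hm_mult hm_const hm_prod hm_power Zhm S)
    then show ?thesis by (simp add: c)
  qed
  have Qc: "continuous_on UNIV (\<lambda>q::(real^3)\<times>(complex^'n). Q (snd q))"
    using C2_cont[OF hm_C2[OF Phm[OF open_UNIV assms(6)]]] .
  have pc: "continuous_on UNIV g0"
    using C2_cont[OF hm_C2[OF g0hm[OF open_UNIV]]] .
  show ?thesis
  proof (cases "even d")
    case True
    define D where "D = {(x::real^3, z::complex^'n). Q z \<noteq> 0}"
    have De: "D = (\<lambda>q. Q (snd q)) -` (-{0})" unfolding D_def by auto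
    have oD: "open D" unfolding De by (rule open_pre[OF Qc]) auto
    have fe: "(\<lambda>(x, z). ((if even d then p x ^ (d div 2) else csqrt (p x) ^ d) + P z) / Q z) =
      (\<lambda>q. (g0 q ^ (d div 2) + P (snd q)) * inverse (Q (snd q)))"
      using True by (auto simp: g0_def divide_inverse)
    have "hm D G (\<lambda>q. (g0 q ^ (d div 2) + P (snd q)) * inverse (Q (snd q)))"
      by (intro hm_mult hm_add hm_power g0hm oD Phm assms(5)
          hm_holo[OF oD _ _ _ Phm[OF oD assms(6)], where V="-{0}"]) (auto simp: D_def intro!: holomorphic_intros)
    then show ?thesis unfolding fe using True
      by (simp add: D_def[symmetric]) (intro hm_morph oD hm_C2 hm_tension hm_kappa, assumption+)
  next
    case False
    define D where "D = {(x::real^3, z::complex^'n). Q z \<noteq> 0 \<and> \<not> (p x \<in> \<real> \<and> Re (p x) \<le> 0)}"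
    have De: "D = (\<lambda>q. Q (snd q)) -` (-{0}) \<inter> g0 -` (-\<real>\<^sub>\<le>\<^sub>0)"
      unfolding D_def g0_def by (auto simp: complex_nonpos_Reals_iff complex_is_Real_iff)
    have oD: "open D" unfolding De
      by (intro open_Int open_pre[OF Qc] open_pre[OF pc] open_Compl closed_nonpos_Reals_complex) auto
    have fe: "(\<lambda>(x, z). ((if even d then p x ^ (d div 2) else csqrt (p x) ^ d) + P z) / Q z) =
      (\<lambda>q. (csqrt (g0 q) ^ d + P (snd q)) * inverse (Q (snd q)))"
      using False by (auto simp: g0_def divide_inverse)
    have "hm D G (\<lambda>q. (csqrt (g0 q) ^ d + P (snd q)) * inverse (Q (snd q)))"
      by (intro hm_mult hm_add oD Phm assms(5)
          hm_holo[OF oD _ _ _ Phm[OF oD assms(6)], where V="-{0}"]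
          hm_holo[OF oD _ _ _ g0hm[OF oD], where V="-\<real>\<^sub>\<le>\<^sub>0"])
        (auto simp: D_def g0_def complex_nonpos_Reals_iff complex_is_Real_iff intro!: holomorphic_intros)
    then have "harmonic_morphism D (\<lambda>q. (csqrt (g0 q) ^ d + P (snd q)) * inverse (Q (snd q)))"
      by (intro hm_morph oD hm_C2 hm_tension hm_kappa, assumption+)
    then show ?thesis unfolding fe D_def using False by simp
  qed
qed

end
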